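(* Assume BMIP has a finite optimal solution. Let $Q=2^J$ and let $\mathbf t^{k,1},\dots,\mathbf t^{k,Q}$ enumerate all vectors in $\{0,1\}^J$. Then BMIP1 is equivalent (same optimal value and same optimal values of the variables $(\mathbf p,\mathbf p^s,\mathbf z,\mathbf x',\mathbf q',\mathbf y',\mathbf t')$) to the single-level problem $$\textbf{BMIPe}:\ \max\ \mathcal P(\mathbf p,\mathbf p^s,\mathbf z,\mathbf y',\mathbf t')$$ over $(\mathbf p,\mathbf p^s,\mathbf z,\mathbf x',\mathbf q',\mathbf y',\mathbf t')$ and dual variables $\mu_1^{k,l},\mu_2^{k,l},\nu_j^{k,l},\Gamma_j^{k,l},\sigma_j^{k,l},\xi_i^{k,l},\tau_{i,j}^{k,l}\ge0$, $\eta_i^{k,l}\in\mathbb R$ ($k\in\mathcal K$, $1\le l\le Q$), subject to $(\mathbf p,\mathbf p^s,\mathbf z,\mathbf x',\mathbf q',\mathbf y',\mathbf t')\in\mathcal H$, $(\mathbf x'^k,\mathbf q'^k,\mathbf y'^k,\mathbf t'^k)\in\mathcal S^k(\mathbf p,\mathbf p^s,\mathbf z)$ for all $k$, and, for all $k$ and all $1\le l\le Q$: $$p_0(1+\mu_1^{k,l})-\mu_2^{k,l}\ge0;\quad p_j\mu_1^{k,l}-\Gamma_j^{k,l}+\sigma_j^{k,l}+p_j\ge0\ \forall j;$$ $$\mu_2^{k,l}+d_{i,0}\xi_i^{k,l}-\eta_i^{k,l}\ge-w^kd_{i,0}\ \forall i;\quad \eta_i^{k,l}\le\psi_i^k\ \forall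 i;\quad \Gamma_j^{k,l}+d_{i,j}\xi_i^{k,l}+\tau_{i,j}^{k,l}-\eta_i^{k,l}\ge-w^kd_{i,j}\ \forall i,j;$$ $$\mathcal C^k(\mathbf x'^k,\mathbf q'^k,\mathbf y'^k,\mathbf t'^k\mid\mathbf p,\mathbf p^s,\mathbf z)\le\sum_j(\phi_j^k+s^kp_j^s)t_j^{k,l}-\mu_1^{k,l}\Big(B^k-\sum_j(\phi_j^k+s^kp_j^s)t_j^{k,l}\Big)+\sum_j\nu_j^{k,l}(t_j^{k,l}-z_j)$$ $$\qquad+\sum_iR_i^k\eta_i^{k,l}-\sum_iR_i^kD^{k,m}\xi_i^{k,l}-\sum_jC_jt_j^{k,l}\sigma_j^{k,l}-\sum_{i,j}a_{i,j}^k\tau_{i,j}^{k,l}R_i^k.$$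
   Context: Model. Finite sets $\mathcal I$ (areas), $\mathcal J$ (edge nodes, $|\mathcal J|=J$), $\mathcal K$ (services). Nonnegative parameters $C_j>0$, $S_j$, $d_{i,j}$, $d_{i,0}$, $D^{k,m}$, $B^k$, $s^k$, $w^k$, $\psi_i^k$, $R_i^k$, $\phi_j^k$, $c_j$, $f_j$, $p_0$; $a_{i,j}^k\in\{0,1\}$; finite price menus $p_j^1,\dots,p_j^V$, $p_j^{s1},\dots,p_j^{sH}$. Follower-$k$ variables: $x_{i,0}^k,x_{i,j}^k,y_0^k,y_j^k,q_i^k\ge0$, $t_j^k\in\{0,1\}$. $\mathcal S^k(\mathbf p,\mathbf p^s,\mathbf z)$ is defined by: $p_0y_0^k+\sum_j p_jy_j^k+\sum_j(\phi_j^k+s^kp_j^s)t_j^k\le B^k$; $t_j^k\le z_j$; $y_j^k\le C_jt_j^k$; $y_0^k\ge\sum_i x_{i,0}^k$; $y_j^k\ge\sum_i x_{i,j}^k$; $x_{i,0}^k+\sum_j x_{i,j}^k+q_i^k=R_i^k$; $x_{i,0}^kd_{i,0}+\sum_jx_{i,j}^kd_{i,j}\le D^{k,m}R_i^k$; $x_{i,j}^k\le a_{i,j}^kR_i^k$. Follower cost $\mathcal C^k=p_0y_0^k+\sum_jp_jy_j^k+\sum_i\psi_i^kq_i^k+\sum_j(\phi_j^k+s^kp_j^s)t_j^k+w^k(\sum_ix_{i,0}^kd_{i,0}+\sum_{i,j}x_{i,j}^kd_{i,j})$. $\mathcal H$: $\sum_ky_j^k\le z_jC_j$, $z_j\in\{0,1\}$,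 $\sum_ks^kt_j^k\le z_jS_j$, each $p_j$, $p^s_j$ chosen from its menu. Platform profit $\mathcal P=\sum_{j,k}(\phi_j^k+s^kp_j^s)t_j^k+\sum_jp_j\sum_ky_j^k-\sum_j(f_jz_j+c_j\sum_ky_j^k/C_j)$. BMIP: maximize $\mathcal P$ over tuples in $\mathcal H$ whose follower-$k$ components minimize $\mathcal C^k$ over $\mathcal S^k(\mathbf p,\mathbf p^s,\mathbf z)$ for every $k$. BMIP1: maximize $\mathcal P(\mathbf p,\mathbf p^s,\mathbf z,\mathbf y',\mathbf t')$ s.t. the tuple with primed follower variables lies in $\mathcal H$, $(\mathbf x'^k,\mathbf q'^k,\mathbf y'^k,\mathbf t'^k)\in\mathcal S^k(\mathbf p,\mathbf p^s,\mathbf z)$, and $\mathcal C^k$ at the primed vector is $\le\min_{\mathcal S^k(\mathbf p,\mathbf p^s,\mathbf z)}\mathcal C^k$ for each $k$. *)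

theory Defs
  imports "HOL-Analysis.Analysis"
begin

text \<open>Index sets: areas are the finite type 'i, edge nodes the finite type 'j
 (so J = CARD('j)), services the finite type 'k.
 Binary quantities (z_j, t_j^k, a_{i,j}^k) are real numbers restricted to {0,1}.\<close>

record ('i,'j,'k) prm =
  Cj    :: "'j \<Rightarrow> real"
  Sj    :: "'j \<Rightarrow> real"
  dij   :: "'i \<Rightarrow> 'j \<Rightarrow> real"
  di0   :: "'i \<Rightarrow> real"
  Dkm   :: "'k \<Rightarrow> real"
  Bk    :: "'k \<Rightarrow> real"
  sk    :: "'k \<Rightarrow> real"
  wk    :: "'k \<Rightarrow> real"
  psik  :: "'i \<Rightarrow> 'k \<Rightarrow> real"
  Rik   :: "'i \<Rightarrow> 'k \<Rightarrow> real"
  phijk :: "'j \<Rightarrow> 'k \<Rightarrow> real"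
  cj    :: "'j \<Rightarrow> real"
  fj    :: "'j \<Rightarrow> real"
  p0    :: real
  aijk  :: "'i \<Rightarrow> 'j \<Rightarrow> 'k \<Rightarrow> real"
  menu  :: "'j \<Rightarrow> real set"
  smenu :: "'j \<Rightarrow> real set"

definition valid_prm :: "('i::finite,'j::finite,'k::finite) prm \<Rightarrow> bool" where
  "valid_prm P \<longleftrightarrow>
     (\<forall>j. Cj P j > 0) \<and> (\<forall>j. Sj P j \<ge> 0) \<and> (\<forall>i j. dij P i j \<ge> 0) \<and> (\<forall>i. di0 P i \<ge> 0)
   \<and> (\<forall>k. Dkm P k \<ge> 0) \<and> (\<forall>k. Bk P k \<ge> 0) \<and> (\<forall>k. sk P k \<ge> 0) \<and> (\<forall>k. wk P k \<ge> 0)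
   \<and> (\<forall>i k. psik P i k \<ge> 0) \<and> (\<forall>i k. Rik P i k \<ge> 0) \<and> (\<forall>j k. phijk P j k \<ge> 0)
   \<and> (\<forall>j. cj P j \<ge> 0) \<and> (\<forall>j. fj P j \<ge> 0) \<and> p0 P \<ge> 0
   \<and> (\<forall>i j k. aijk P i j k \<in> {0,1})
   \<and> (\<forall>j. finite (menu P j)) \<and> (\<forall>j. finite (smenu P j))"

record ('i,'j) fv =
  fx0 :: "'i \<Rightarrow> real"
  fx  :: "'i \<Rightarrow> 'j \<Rightarrow> real"
  fq  :: "'i \<Rightarrow> real"
  fy0 :: real
  fy  :: "'j \<Rightarrow> real"
  ft  :: "'j \<Rightarrow> real"

record ('i,'j,'k) pv =
  pp  :: "'j \<Rightarrow> real"
  pps :: "'j \<Rightarrow> real"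
  zz  :: "'j \<Rightarrow> real"
  fol :: "'k \<Rightarrow> ('i,'j) fv"

record ('i,'j) dv =
  mu1 :: real
  mu2 :: real
  nu  :: "'j \<Rightarrow> real"
  Gam :: "'j \<Rightarrow> real"
  sig :: "'j \<Rightarrow> real"
  xi  :: "'i \<Rightarrow> real"
  tau :: "'i \<Rightarrow> 'j \<Rightarrow> real"
  eta :: "'i \<Rightarrow> real"

definition Sk :: "('i::finite,'j::finite,'k::finite) prm \<Rightarrow> 'k \<Rightarrow> ('j \<Rightarrow> real) \<Rightarrow> ('j \<Rightarrow> real)
                  \<Rightarrow> ('j \<Rightarrow> real) \<Rightarrow> ('i,'j) fv set" where
  "Sk P k p ps z = {v.
     (\<forall>i. fx0 v i \<ge> 0) \<and> (\<forall>i j. fx v i j \<ge> 0) \<and> (\<forall>i. fq v i \<ge> 0) \<and> fy0 v \<ge> 0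
   \<and> (\<forall>j. fy v j \<ge> 0) \<and> (\<forall>j. ft v j \<in> {0,1})
   \<and> p0 P * fy0 v + (\<Sum>j\<in>UNIV. p j * fy v j)
       + (\<Sum>j\<in>UNIV. (phijk P j k + sk P k * ps j) * ft v j) \<le> Bk P k
   \<and> (\<forall>j. ft v j \<le> z j)
   \<and> (\<forall>j. fy v j \<le> Cj P j * ft v j)
   \<and> fy0 v \<ge> (\<Sum>i\<in>UNIV. fx0 v i)
   \<and> (\<forall>j. fy v j \<ge> (\<Sum>i\<in>UNIV. fx v i j))
   \<and> (\<forall>i. fx0 v i + (\<Sum>j\<in>UNIV. fx v i j) + fq v i = Rik P i k)
   \<and> (\<forall>i. fx0 v i * di0 P i + (\<Sum>j\<in>UNIV. fx v i j * dij P i j) \<le> Dkm P k * Rik P i k)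
   \<and> (\<forall>i j. fx v i j \<le> aijk P i j k * Rik P i k)}"

definition Ck :: "('i::finite,'j::finite,'k::finite) prm \<Rightarrow> 'k \<Rightarrow> ('j \<Rightarrow> real) \<Rightarrow> ('j \<Rightarrow> real)
                  \<Rightarrow> ('i,'j) fv \<Rightarrow> real" where
  "Ck P k p ps v =
     p0 P * fy0 v + (\<Sum>j\<in>UNIV. p j * fy v j) + (\<Sum>i\<in>UNIV. psik P i k * fq v i)
   + (\<Sum>j\<in>UNIV. (phijk P j k + sk P k * ps j) * ft v j)
   + wk P k * ((\<Sum>i\<in>UNIV. fx0 v i * di0 P i) + (\<Sum>i\<in>UNIV. \<Sum>j\<in>UNIV. fx v i j * dij P i j))"

definition inH :: "('i::finite,'j::finite,'k::finite) prm \<Rightarrow> ('i,'j,'k) pv \<Rightarrow> bool" where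
  "inH P v \<longleftrightarrow>
     (\<forall>j. (\<Sum>k\<in>UNIV. fy (fol v k) j) \<le> zz v j * Cj P j)
   \<and> (\<forall>j. zz v j \<in> {0,1})
   \<and> (\<forall>j. (\<Sum>k\<in>UNIV. sk P k * ft (fol v k) j) \<le> zz v j * Sj P j)
   \<and> (\<forall>j. pp v j \<in> menu P j) \<and> (\<forall>j. pps v j \<in> smenu P j)"

definition profit :: "('i::finite,'j::finite,'k::finite) prm \<Rightarrow> ('i,'j,'k) pv \<Rightarrow> real" where
  "profit P v =
     (\<Sum>j\<in>UNIV. \<Sum>k\<in>UNIV. (phijk P j k + sk P k * pps v j) * ft (fol v k) j)
   + (\<Sum>j\<in>UNIV. pp v j * (\<Sum>k\<in>UNIV. fy (fol v k) j))
   - (\<Sum>j\<in>UNIV. fj P j * zz v j + cj P j * (\<Sum>k\<in>UNIV. fy (fol v k) j) / Cj P j)"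

definition feas_BMIP :: "('i::finite,'j::finite,'k::finite) prm \<Rightarrow> ('i,'j,'k) pv \<Rightarrow> bool" where
  "feas_BMIP P v \<longleftrightarrow> inH P v \<and>
     (\<forall>k. is_arg_min (Ck P k (pp v) (pps v)) (\<lambda>u. u \<in> Sk P k (pp v) (pps v) (zz v)) (fol v k))"

definition opt_BMIP :: "('i::finite,'j::finite,'k::finite) prm \<Rightarrow> ('i,'j,'k) pv \<Rightarrow> bool" where
  "opt_BMIP P v \<longleftrightarrow> feas_BMIP P v \<and> (\<forall>v'. feas_BMIP P v' \<longrightarrow> profit P v' \<le> profit P v)"

definition feas_BMIP1 :: "('i::finite,'j::finite,'k::finite) prm \<Rightarrow> ('i,'j,'k) pv \<Rightarrow> bool" where
  "feas_BMIP1 P v \<longleftrightarrow> inH P v \<and>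
     (\<forall>k. fol v k \<in> Sk P k (pp v) (pps v) (zz v)) \<and>
     (\<forall>k. \<forall>u \<in> Sk P k (pp v) (pps v) (zz v). Ck P k (pp v) (pps v) (fol v k) \<le> Ck P k (pp v) (pps v) u)"

definition opt_BMIP1 :: "('i::finite,'j::finite,'k::finite) prm \<Rightarrow> ('i,'j,'k) pv \<Rightarrow> bool" where
  "opt_BMIP1 P v \<longleftrightarrow> feas_BMIP1 P v \<and> (\<forall>v'. feas_BMIP1 P v' \<longrightarrow> profit P v' \<le> profit P v)"

definition dual_ok :: "('i::finite,'j::finite,'k::finite) prm \<Rightarrow> ('i,'j,'k) pv \<Rightarrow> 'k
                       \<Rightarrow> ('j \<Rightarrow> real) \<Rightarrow> ('i,'j) dv \<Rightarrow> bool" where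
  "dual_ok P v k tv D \<longleftrightarrow>
     mu1 D \<ge> 0 \<and> mu2 D \<ge> 0 \<and> (\<forall>j. nu D j \<ge> 0) \<and> (\<forall>j. Gam D j \<ge> 0) \<and> (\<forall>j. sig D j \<ge> 0)
   \<and> (\<forall>i. xi D i \<ge> 0) \<and> (\<forall>i j. tau D i j \<ge> 0)
   \<and> p0 P * (1 + mu1 D) - mu2 D \<ge> 0
   \<and> (\<forall>j. pp v j * mu1 D - Gam D j + sig D j + pp v j \<ge> 0)
   \<and> (\<forall>i. mu2 D + di0 P i * xi D i - eta D i \<ge> - wk P k * di0 P i)
   \<and> (\<forall>i. eta D i \<le> psik P i k)
   \<and> (\<forall>i j. Gam D j + dij P i j * xi D i + tau D i j - eta D i \<ge> - wk P k * dij P i j)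
   \<and> Ck P k (pp v) (pps v) (fol v k) \<le>
        (\<Sum>j\<in>UNIV. (phijk P j k + sk P k * pps v j) * tv j)
      - mu1 D * (Bk P k - (\<Sum>j\<in>UNIV. (phijk P j k + sk P k * pps v j) * tv j))
      + (\<Sum>j\<in>UNIV. nu D j * (tv j - zz v j))
      + (\<Sum>i\<in>UNIV. Rik P i k * eta D i)
      - (\<Sum>i\<in>UNIV. Rik P i k * Dkm P k * xi D i)
      - (\<Sum>j\<in>UNIV. Cj P j * tv j * sig D j)
      - (\<Sum>i\<in>UNIV. \<Sum>j\<in>UNIV. aijk P i j k * tau D i j * Rik P i k)"

text \<open>BMIPe: en k l = t^{k,l} (l = 1..Q), duals D k l.\<close>
definition feas_BMIPe :: "('i::finite,'j::finite,'k::finite) prm \<Rightarrow> ('k \<Rightarrow> nat \<Rightarrow> 'j \<Rightarrow> real)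
                          \<Rightarrow> ('i,'j,'k) pv \<Rightarrow> ('k \<Rightarrow> nat \<Rightarrow> ('i,'j) dv) \<Rightarrow> bool" where
  "feas_BMIPe P en v D \<longleftrightarrow> inH P v \<and>
     (\<forall>k. fol v k \<in> Sk P k (pp v) (pps v) (zz v)) \<and>
     (\<forall>k. \<forall>l \<in> {1..2 ^ CARD('j)}. dual_ok P v k (en k l) (D k l))"

definition opt_BMIPe :: "('i::finite,'j::finite,'k::finite) prm \<Rightarrow> ('k \<Rightarrow> nat \<Rightarrow> 'j \<Rightarrow> real)
                          \<Rightarrow> ('i,'j,'k) pv \<Rightarrow> ('k \<Rightarrow> nat \<Rightarrow> ('i,'j) dv) \<Rightarrow> bool" where
  "opt_BMIPe P en v D \<longleftrightarrow> feas_BMIPe P en v D \<and>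
     (\<forall>v' D'. feas_BMIPe P en v' D' \<longrightarrow> profit P v' \<le> profit P v)"

end

theory Submission
  imports Defs
begin


lemma sum_UNIV_Plus:
  "sum f (UNIV::('a::finite + 'b::finite) set) = (\<Sum>a\<in>UNIV. f (Inl a)) + (\<Sum>b\<in>UNIV. f (Inr b))"
  by (subst UNIV_Plus_UNIV[symmetric], subst sum.Plus) (auto simp: comp_def)

lemma sum_UNIV_unit: "sum f (UNIV::unit set) = f ()"
  by (simp add: UNIV_unit)

lemma cone_sep:
  fixes G :: "'g::finite \<Rightarrow> 'v::euclidean_space"
  assumes "z \<notin> {(\<Sum>g\<in>UNIV. l g *\<^sub>R G g) | l. \<forall>g. 0 \<le> l g}"
  shows "\<exists>a. (\<forall>g. 0 \<le> a \<bullet> G g) \<and> a \<bullet> z < 0"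
proof -
  define K where "K = {(\<Sum>g\<in>UNIV. l g *\<^sub>R G g) | l. \<forall>g. 0 \<le> l g}"
  have cc: "convex_cone K"
    unfolding convex_cone_iff
  proof (intro conjI ballI allI impI)
    show "0 \<in> K" unfolding K_def by (rule CollectI, rule exI[of _ "\<lambda>_. 0"]) auto
  next
    fix x y assume "x \<in> K" "y \<in> K"
    then obtain l m where "x = (\<Sum>g\<in>UNIV. l g *\<^sub>R G g)" "\<forall>g. 0 \<le> l g"
        "y = (\<Sum>g\<in>UNIV. m g *\<^sub>R G g)" "\<forall>g. 0 \<le> m g" unfolding K_def by auto
    then show "x + y \<in> K" unfolding K_def
      by (intro CollectI exI[of _ "\<lambda>g. l g + m g"]) (auto simp: scaleR_add_left sum.distrib)
  next
    fix x and c :: real assume "x \<in> K" "0 \<le> c"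
    then obtain l where "x = (\<Sum>g\<in>UNIV. l g *\<^sub>R G g)" "\<forall>g. 0 \<le> l g" unfolding K_def by auto
    then show "c *\<^sub>R x \<in> K" unfolding K_def using \<open>0 \<le> c\<close>
      by (intro CollectI exI[of _ "\<lambda>g. c * l g"]) (auto simp: scaleR_sum_right)
  qed
  have sub: "G ` UNIV \<subseteq> K"
  proof
    fix x assume "x \<in> G ` UNIV"
    then obtain h where "x = G h" by auto
    have "(\<Sum>g\<in>UNIV. (if g = h then 1 else 0) *\<^sub>R G g) = (\<Sum>g\<in>UNIV. if g = h then G g else 0)"
      by (rule sum.cong) auto
    then have "G h = (\<Sum>g\<in>UNIV. (if g = h then 1 else 0) *\<^sub>R G g)" by simp
    then show "x \<in> K" unfolding K_def using \<open>x = G h\<close>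
      by (intro CollectI exI[of _ "\<lambda>g. if g = h then 1 else 0"]) auto
  qed
  have hs: "convex_cone hull (G ` UNIV) \<subseteq> K"
    using sub cc by (rule hull_minimal)
  have "z \<notin> convex_cone hull (G ` UNIV)" using hs assms K_def by auto
  then obtain a b where ab: "a \<bullet> z < b" "\<forall>x\<in>convex_cone hull (G ` UNIV). b < a \<bullet> x"
    using separating_hyperplane_closed_point[OF convex_convex_cone_hull closed_convex_cone_hull, of "range G" z]
    by auto
  have b0: "b < 0" using ab(2) convex_cone_hull_contains_0 by force
  have "0 \<le> a \<bullet> G g" for g
  proof (rule ccontr)
    assume neg: "\<not> 0 \<le> a \<bullet> G g"
    define c where "c = b / (a \<bullet> G g)"
    have c0: "0 \<le> c" unfolding c_def using neg b0 by (simp add: divide_nonpos_neg)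
    have "c *\<^sub>R G g \<in> convex_cone hull (G ` UNIV)"
      by (rule convex_cone_hull_mul[OF _ c0]) (simp add: hull_inc)
    then have "b < a \<bullet> (c *\<^sub>R G g)" using ab(2) by blast
    also have "\<dots> = b" using neg unfolding c_def by simp
    finally show False by simp
  qed
  then show ?thesis using ab(1) b0 by force
qed

lemma neg_div_aux: "(r::real) < 0 \<Longrightarrow> - r * b \<le> S \<Longrightarrow> b \<le> S / (- r)"
  using divide_right_mono[of "-r*b" S "-r"] by simp

lemma neg_div_aux2: "(r::real) < 0 \<Longrightarrow> S < - r * d \<Longrightarrow> S / (- r) < d"
  using divide_strict_right_mono[of S "-r*d" "-r"] by simp

lemma farkas_fun:
  fixes A :: "'s::finite \<Rightarrow> 'n::finite \<Rightarrow> real" and b :: "'s \<Rightarrow> real"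
    and c :: "'n \<Rightarrow> real" and d :: real
  shows "(\<exists>l. (\<forall>s. 0 \<le> l s) \<and> (\<forall>n. (\<Sum>s\<in>UNIV. l s * A s n) \<le> c n) \<and> d \<le> (\<Sum>s\<in>UNIV. l s * b s))
    \<or> (\<exists>y r. (\<forall>n. 0 \<le> y n) \<and> r \<le> 0 \<and> (\<forall>s. 0 \<le> (\<Sum>n\<in>UNIV. A s n * y n) + r * b s)
            \<and> (\<Sum>n\<in>UNIV. c n * y n) + r * d < 0)"
proof -
  define G :: "'s + 'n + unit \<Rightarrow> (real^'n) \<times> real" where
    "G = (\<lambda>g. case g of Inl s \<Rightarrow> ((\<chi> n. A s n), b s) | Inr (Inl n) \<Rightarrow> (axis n 1, 0)
               | Inr (Inr u) \<Rightarrow> (0, -1))"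
  define z where "z = ((\<chi> n. c n), d)"
  show ?thesis
  proof (cases "z \<in> {(\<Sum>g\<in>UNIV. l g *\<^sub>R G g) | l. \<forall>g. 0 \<le> l g}")
    case True
    then obtain l where l0: "\<forall>g. 0 \<le> l g" and zl: "z = (\<Sum>g\<in>UNIV. l g *\<^sub>R G g)" by auto
    have fz: "(\<chi> n. c n) = (\<Sum>s\<in>UNIV. l (Inl s) *\<^sub>R (\<chi> n. A s n)) + (\<Sum>n\<in>UNIV. l (Inr (Inl n)) *\<^sub>R axis n 1)"
      using arg_cong[OF zl, of fst] unfolding z_def G_def
      by (simp add: sum_UNIV_Plus fst_sum)
    have sz: "d = (\<Sum>s\<in>UNIV. l (Inl s) * b s) - l (Inr (Inr ()))"
      using arg_cong[OF zl, of snd] unfolding z_def G_def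
      by (simp add: sum_UNIV_Plus snd_sum sum_UNIV_unit)
    have "\<forall>n. (\<Sum>s\<in>UNIV. l (Inl s) * A s n) \<le> c n"
    proof
      fix n
      have "c n = (\<Sum>s\<in>UNIV. l (Inl s) * A s n) + (\<Sum>m\<in>UNIV. l (Inr (Inl m)) * (axis m 1 :: real^'n) $ n)"
        using arg_cong[OF fz, of "\<lambda>v. v $ n"] by simp
      also have "(\<Sum>m\<in>UNIV. l (Inr (Inl m)) * (axis m 1 :: real^'n) $ n) = l (Inr (Inl n))"
        by (simp add: axis_def if_distrib cong: if_cong)
      finally show "(\<Sum>s\<in>UNIV. l (Inl s) * A s n) \<le> c n" using l0 by simp
    qed
    moreover have "d \<le> (\<Sum>s\<in>UNIV. l (Inl s) * b s)" using sz l0 by simp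
    ultimately show ?thesis using l0 by (intro disjI1 exI[of _ "\<lambda>s. l (Inl s)"]) auto
  next
    case False
    from cone_sep[OF False] obtain a where a: "\<forall>g. 0 \<le> a \<bullet> G g" "a \<bullet> z < 0" by blast
    obtain y r where ayr: "a = (y, r)" by force
    have "\<forall>n. 0 \<le> y $ n"
    proof
      fix n show "0 \<le> y $ n" using a(1)[rule_format, of "Inr (Inl n)"] unfolding G_def ayr
        by (simp add: inner_axis)
    qed
    moreover have "r \<le> 0" using a(1)[rule_format, of "Inr (Inr ())"] unfolding G_def ayr by simp
    moreover have "\<forall>s. 0 \<le> (\<Sum>n\<in>UNIV. A s n * y $ n) + r * b s"
    proof
      fix s show "0 \<le> (\<Sum>n\<in>UNIV. A s n * y $ n) + r * b s"
        using a(1)[rule_format, of "Inl s"] unfolding G_def ayr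
        by (simp add: inner_vec_def mult.commute)
    qed
    moreover have "(\<Sum>n\<in>UNIV. c n * y $ n) + r * d < 0"
      using a(2) unfolding z_def ayr by (simp add: inner_vec_def mult.commute)
    ultimately show ?thesis by (intro disjI2 exI[of _ "\<lambda>n. y $ n"] exI[of _ r]) auto
  qed
qed

lemma lp_duality:
  fixes A :: "'s::finite \<Rightarrow> 'n::finite \<Rightarrow> real" and b :: "'s \<Rightarrow> real"
    and c :: "'n \<Rightarrow> real" and d :: real
  assumes dfeas: "\<exists>l. (\<forall>s. 0 \<le> l s) \<and> (\<forall>n. (\<Sum>s\<in>UNIV. l s * A s n) \<le> c n)"
    and bound: "\<And>x. (\<forall>n. 0 \<le> x n) \<Longrightarrow> (\<forall>s. b s \<le> (\<Sum>n\<in>UNIV. A s n * x n))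
                  \<Longrightarrow> d \<le> (\<Sum>n\<in>UNIV. c n * x n)"
  shows "\<exists>l. (\<forall>s. 0 \<le> l s) \<and> (\<forall>n. (\<Sum>s\<in>UNIV. l s * A s n) \<le> c n) \<and> d \<le> (\<Sum>s\<in>UNIV. l s * b s)"
proof (cases "\<exists>x. (\<forall>n. 0 \<le> x n) \<and> (\<forall>s. b s \<le> (\<Sum>n\<in>UNIV. A s n * x n))")
  case True
  then obtain x0 where x0: "\<forall>n. 0 \<le> x0 n" "\<forall>s. b s \<le> (\<Sum>n\<in>UNIV. A s n * x0 n)" by blast
  show ?thesis
  proof (rule disjE[OF farkas_fun[of A c d b]])
    assume "\<exists>y r. (\<forall>n. 0 \<le> y n) \<and> r \<le> 0 \<and> (\<forall>s. 0 \<le> (\<Sum>n\<in>UNIV. A s n * y n) + r * b s)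
            \<and> (\<Sum>n\<in>UNIV. c n * y n) + r * d < 0"
    then obtain y r where y: "\<forall>n. 0 \<le> y n" "r \<le> 0" "\<forall>s. 0 \<le> (\<Sum>n\<in>UNIV. A s n * y n) + r * b s"
       "(\<Sum>n\<in>UNIV. c n * y n) + r * d < 0" by blast
    show ?thesis
    proof (cases "r < 0")
      case True
      define x where "x = (\<lambda>n. y n / (- r))"
      have "\<forall>n. 0 \<le> x n" using y(1) True unfolding x_def by (simp add: divide_nonneg_neg)
      moreover have "\<forall>s. b s \<le> (\<Sum>n\<in>UNIV. A s n * x n)"
      proof
        fix s
        have "(\<Sum>n\<in>UNIV. A s n * x n) = (\<Sum>n\<in>UNIV. A s n * y n) / (- r)"
          unfolding x_def by (simp add: sum_divide_distrib sum_negf)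
        moreover have "- r * b s \<le> (\<Sum>n\<in>UNIV. A s n * y n)" using y(3)[rule_format, of s] by linarith
        ultimately show "b s \<le> (\<Sum>n\<in>UNIV. A s n * x n)" using True neg_div_aux by metis
      qed
      ultimately have "d \<le> (\<Sum>n\<in>UNIV. c n * x n)" by (rule bound)
      moreover have "(\<Sum>n\<in>UNIV. c n * x n) = (\<Sum>n\<in>UNIV. c n * y n) / (- r)"
        unfolding x_def by (simp add: sum_divide_distrib sum_negf)
      moreover have "(\<Sum>n\<in>UNIV. c n * y n) < - r * d" using y(4) by simp
      ultimately show ?thesis using True neg_div_aux2 by (metis not_le)
    next
      case False
      then have r0: "r = 0" using y(2) by simp
      define cy where "cy = (\<Sum>n\<in>UNIV. c n * y n)"
      have cy: "cy < 0" using y(4) r0 cy_def by simp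
      define t where "t = ((\<Sum>n\<in>UNIV. c n * x0 n) - d + 1) / (- cy)"
      have t0: "0 \<le> t"
      proof -
        have "d \<le> (\<Sum>n\<in>UNIV. c n * x0 n)" using bound x0 by blast
        then have "0 \<le> (\<Sum>n\<in>UNIV. c n * x0 n) - d + 1" by simp
        moreover have "0 < - cy" using cy by simp
        ultimately show ?thesis unfolding t_def by (rule divide_nonneg_pos)
      qed
      define x where "x = (\<lambda>n. x0 n + t * y n)"
      have "\<forall>n. 0 \<le> x n" using x0(1) y(1) t0 unfolding x_def by simp
      moreover have "\<forall>s. b s \<le> (\<Sum>n\<in>UNIV. A s n * x n)"
      proof
        fix s
        have "(\<Sum>n\<in>UNIV. A s n * x n) = (\<Sum>n\<in>UNIV. A s n * x0 n) + t * (\<Sum>n\<in>UNIV. A s n * y n)"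
          unfolding x_def by (simp add: algebra_simps sum.distrib sum_distrib_left)
        moreover have "0 \<le> (\<Sum>n\<in>UNIV. A s n * y n)" using y(3) r0 by auto
        moreover have "0 \<le> t * (\<Sum>n\<in>UNIV. A s n * y n)"
          using t0 \<open>0 \<le> (\<Sum>n\<in>UNIV. A s n * y n)\<close> by (rule mult_nonneg_nonneg)
        ultimately show "b s \<le> (\<Sum>n\<in>UNIV. A s n * x n)" using x0(2)[rule_format, of s] by linarith
      qed
      ultimately have "d \<le> (\<Sum>n\<in>UNIV. c n * x n)" by (rule bound)
      moreover have "(\<Sum>n\<in>UNIV. c n * x n) = (\<Sum>n\<in>UNIV. c n * x0 n) + t * cy"
        unfolding x_def cy_def by (simp add: algebra_simps sum.distrib sum_distrib_left)
      moreover have "t * cy = - ((\<Sum>n\<in>UNIV. c n * x0 n) - d + 1)" unfolding t_def using cy by simp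
      ultimately show ?thesis by simp
    qed
  qed
next
  case False
  obtain l0 where l0: "\<forall>s. 0 \<le> l0 s" "\<forall>n. (\<Sum>s\<in>UNIV. l0 s * A s n) \<le> c n" using dfeas by blast
  have "\<exists>l. (\<forall>s. 0 \<le> l s) \<and> (\<forall>n. (\<Sum>s\<in>UNIV. l s * A s n) \<le> 0) \<and> 1 \<le> (\<Sum>s\<in>UNIV. l s * b s)"
  proof (rule disjE[OF farkas_fun[of A "\<lambda>_. 0" 1 b]])
    assume "\<exists>y r. (\<forall>n. 0 \<le> y n) \<and> r \<le> 0 \<and> (\<forall>s. 0 \<le> (\<Sum>n\<in>UNIV. A s n * y n) + r * b s)
            \<and> (\<Sum>n\<in>UNIV. 0 * y n) + r * 1 < 0"
    then obtain y r where y: "\<forall>n. 0 \<le> y n" "\<forall>s. 0 \<le> (\<Sum>n\<in>UNIV. A s n * y n) + r * b s"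
       "r < 0" by auto
    define x where "x = (\<lambda>n. y n / (- r))"
    have "\<forall>n. 0 \<le> x n" using y(1) y(3) unfolding x_def by (simp add: divide_nonneg_neg)
    moreover have "\<forall>s. b s \<le> (\<Sum>n\<in>UNIV. A s n * x n)"
    proof
      fix s
      have "(\<Sum>n\<in>UNIV. A s n * x n) = (\<Sum>n\<in>UNIV. A s n * y n) / (- r)"
        unfolding x_def by (simp add: sum_divide_distrib sum_negf)
      moreover have "- r * b s \<le> (\<Sum>n\<in>UNIV. A s n * y n)" using y(2)[rule_format, of s] by linarith
      ultimately show "b s \<le> (\<Sum>n\<in>UNIV. A s n * x n)" using y(3) neg_div_aux by metis
    qed
    ultimately show ?thesis using False by blast
  qed simp
  then obtain l1 where l1: "\<forall>s. 0 \<le> l1 s" "\<forall>n. (\<Sum>s\<in>UNIV. l1 s * A s n) \<le> 0"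
      "1 \<le> (\<Sum>s\<in>UNIV. l1 s * b s)" by blast
  define M where "M = max 0 (d - (\<Sum>s\<in>UNIV. l0 s * b s))"
  have M0: "0 \<le> M" unfolding M_def by simp
  show ?thesis
  proof (intro exI[of _ "\<lambda>s. l0 s + M * l1 s"] conjI allI)
    fix s show "0 \<le> l0 s + M * l1 s" using l0 l1 M0 by simp
  next
    fix n
    have "(\<Sum>s\<in>UNIV. (l0 s + M * l1 s) * A s n) = (\<Sum>s\<in>UNIV. l0 s * A s n) + M * (\<Sum>s\<in>UNIV. l1 s * A s n)"
      by (simp add: algebra_simps sum.distrib sum_distrib_left)
    moreover have "M * (\<Sum>s\<in>UNIV. l1 s * A s n) \<le> 0" using M0 l1(2) by (simp add: mult_nonneg_nonpos)
    ultimately show "(\<Sum>s\<in>UNIV. (l0 s + M * l1 s) * A s n) \<le> c n" using l0(2)[rule_format, of n] by linarith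
  next
    have "(\<Sum>s\<in>UNIV. (l0 s + M * l1 s) * b s) = (\<Sum>s\<in>UNIV. l0 s * b s) + M * (\<Sum>s\<in>UNIV. l1 s * b s)"
      by (simp add: algebra_simps sum.distrib sum_distrib_left)
    moreover have "M \<le> M * (\<Sum>s\<in>UNIV. l1 s * b s)" using M0 l1(3) by (simp add: mult_le_cancel_left1)
    moreover have "d - (\<Sum>s\<in>UNIV. l0 s * b s) \<le> M" unfolding M_def by simp
    ultimately show "d \<le> (\<Sum>s\<in>UNIV. (l0 s + M * l1 s) * b s)" by linarith
  qed
qed



lemma sum_UNIV_prod:
  "sum f (UNIV::('a::finite \<times> 'b::finite) set) = (\<Sum>a\<in>UNIV. \<Sum>b\<in>UNIV. f (a, b))"
  by (subst UNIV_Times_UNIV[symmetric], subst sum.cartesian_product) simp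

lemma if_mult_zero: "(if P then a else 0) * (b::real) = (if P then a * b else 0)" by simp
lemma mult_if_zero: "(b::real) * (if P then a else 0) = (if P then b * a else 0)" by simp
lemma sum_if_cond: "(\<Sum>j\<in>S. if P then f j else (0::real)) = (if P then sum f S else 0)" by simp

lemmas sumsimps = sum_UNIV_Plus sum_UNIV_prod sum_UNIV_unit if_mult_zero mult_if_zero sum_if_cond

type_synonym ('i,'j) vidx = "'i + ('i \<times> 'j) + 'i + unit + 'j"
type_synonym ('i,'j) cidx = "unit + 'j + unit + 'j + 'i + 'i + 'i + ('i \<times> 'j) + 'j"

definition Amat :: "('i::finite,'j::finite,'k::finite) prm \<Rightarrow> 'k \<Rightarrow> ('j \<Rightarrow> real)
    \<Rightarrow> ('i,'j) cidx \<Rightarrow> ('i,'j) vidx \<Rightarrow> real" where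
 "Amat P k p s n = (case s of
    Inl _ \<Rightarrow> (case n of Inr (Inr (Inr (Inl _))) \<Rightarrow> - p0 P | Inr (Inr (Inr (Inr j))) \<Rightarrow> - p j | _ \<Rightarrow> 0)
  | Inr (Inl j) \<Rightarrow> (case n of Inr (Inr (Inr (Inr j'))) \<Rightarrow> (if j' = j then -1 else 0) | _ \<Rightarrow> 0)
  | Inr (Inr (Inl _)) \<Rightarrow> (case n of Inr (Inr (Inr (Inl _))) \<Rightarrow> 1 | Inl i \<Rightarrow> -1 | _ \<Rightarrow> 0)
  | Inr (Inr (Inr (Inl j))) \<Rightarrow> (case n of Inr (Inr (Inr (Inr j'))) \<Rightarrow> (if j' = j then 1 else 0)
        | Inr (Inl (i, j')) \<Rightarrow> (if j' = j then -1 else 0) | _ \<Rightarrow> 0)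
  | Inr (Inr (Inr (Inr (Inl i)))) \<Rightarrow> (case n of Inl i' \<Rightarrow> (if i' = i then 1 else 0)
        | Inr (Inl (i', j)) \<Rightarrow> (if i' = i then 1 else 0) | Inr (Inr (Inl i')) \<Rightarrow> (if i' = i then 1 else 0)
        | _ \<Rightarrow> 0)
  | Inr (Inr (Inr (Inr (Inr (Inl i))))) \<Rightarrow> (case n of Inl i' \<Rightarrow> (if i' = i then -1 else 0)
        | Inr (Inl (i', j)) \<Rightarrow> (if i' = i then -1 else 0) | Inr (Inr (Inl i')) \<Rightarrow> (if i' = i then -1 else 0)
        | _ \<Rightarrow> 0)
  | Inr (Inr (Inr (Inr (Inr (Inr (Inl i)))))) \<Rightarrow> (case n of Inl i' \<Rightarrow> (if i' = i then - di0 P i else 0)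
        | Inr (Inl (i', j)) \<Rightarrow> (if i' = i then - dij P i j else 0) | _ \<Rightarrow> 0)
  | Inr (Inr (Inr (Inr (Inr (Inr (Inr (Inl (i, j)))))))) \<Rightarrow> (case n of
          Inr (Inl (i', j')) \<Rightarrow> (if i' = i then (if j' = j then -1 else 0) else 0) | _ \<Rightarrow> 0)
  | Inr (Inr (Inr (Inr (Inr (Inr (Inr (Inr j)))))))  \<Rightarrow> 0)"

definition bvec :: "('i::finite,'j::finite,'k::finite) prm \<Rightarrow> 'k \<Rightarrow> ('j \<Rightarrow> real) \<Rightarrow> ('j \<Rightarrow> real)
    \<Rightarrow> ('j \<Rightarrow> real) \<Rightarrow> ('i,'j) cidx \<Rightarrow> real" where
 "bvec P k ps t z s = (case s of
    Inl _ \<Rightarrow> - (Bk P k - (\<Sum>j\<in>UNIV. (phijk P j k + sk P k * ps j) * t j))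
  | Inr (Inl j) \<Rightarrow> - (Cj P j * t j)
  | Inr (Inr (Inl _)) \<Rightarrow> 0
  | Inr (Inr (Inr (Inl j))) \<Rightarrow> 0
  | Inr (Inr (Inr (Inr (Inl i)))) \<Rightarrow> Rik P i k
  | Inr (Inr (Inr (Inr (Inr (Inl i))))) \<Rightarrow> - Rik P i k
  | Inr (Inr (Inr (Inr (Inr (Inr (Inl i)))))) \<Rightarrow> - (Dkm P k * Rik P i k)
  | Inr (Inr (Inr (Inr (Inr (Inr (Inr (Inl (i, j)))))))) \<Rightarrow> - (aijk P i j k * Rik P i k)
  | Inr (Inr (Inr (Inr (Inr (Inr (Inr (Inr j))))))) \<Rightarrow> t j - z j)"

definition cvec :: "('i::finite,'j::finite,'k::finite) prm \<Rightarrow> 'k \<Rightarrow> ('j \<Rightarrow> real)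
    \<Rightarrow> ('i,'j) vidx \<Rightarrow> real" where
 "cvec P k p n = (case n of
    Inl i \<Rightarrow> wk P k * di0 P i
  | Inr (Inl (i, j)) \<Rightarrow> wk P k * dij P i j
  | Inr (Inr (Inl i)) \<Rightarrow> psik P i k
  | Inr (Inr (Inr (Inl _))) \<Rightarrow> p0 P
  | Inr (Inr (Inr (Inr j))) \<Rightarrow> p j)"

lemma row_budget: "(\<Sum>n\<in>UNIV. Amat P k p (Inl u) n * x n) =
   - p0 P * x (Inr (Inr (Inr (Inl ())))) - (\<Sum>j\<in>UNIV. p j * x (Inr (Inr (Inr (Inr j)))))"
  by (simp add: Amat_def sumsimps sum_negf)

lemma row_sig: "(\<Sum>n\<in>UNIV. Amat P k p (Inr (Inl j)) n * x n) = - x (Inr (Inr (Inr (Inr j))))"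
  by (simp add: Amat_def sumsimps)

lemma row_mu2: "(\<Sum>n\<in>UNIV. Amat P k p (Inr (Inr (Inl u))) n * x n) =
   x (Inr (Inr (Inr (Inl ())))) - (\<Sum>i\<in>UNIV. x (Inl i))"
  by (simp add: Amat_def sumsimps sum_negf)

lemma row_gam: "(\<Sum>n\<in>UNIV. Amat P k p (Inr (Inr (Inr (Inl j)))) n * x n) =
   x (Inr (Inr (Inr (Inr j)))) - (\<Sum>i\<in>UNIV. x (Inr (Inl (i, j))))"
  by (simp add: Amat_def sumsimps sum_negf)

lemma row_etap: "(\<Sum>n\<in>UNIV. Amat P k p (Inr (Inr (Inr (Inr (Inl i))))) n * x n) =
   x (Inl i) + (\<Sum>j\<in>UNIV. x (Inr (Inl (i, j)))) + x (Inr (Inr (Inl i)))"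
  by (simp add: Amat_def sumsimps)

lemma row_etam: "(\<Sum>n\<in>UNIV. Amat P k p (Inr (Inr (Inr (Inr (Inr (Inl i)))))) n * x n) =
   - (x (Inl i) + (\<Sum>j\<in>UNIV. x (Inr (Inl (i, j)))) + x (Inr (Inr (Inl i))))"
  by (simp add: Amat_def sumsimps sum_negf)

lemma row_xi: "(\<Sum>n\<in>UNIV. Amat P k p (Inr (Inr (Inr (Inr (Inr (Inr (Inl i))))))) n * x n) =
   - (di0 P i * x (Inl i) + (\<Sum>j\<in>UNIV. dij P i j * x (Inr (Inl (i, j)))))"
  by (simp add: Amat_def sumsimps sum_negf)

lemma row_tau: "(\<Sum>n\<in>UNIV. Amat P k p (Inr (Inr (Inr (Inr (Inr (Inr (Inr (Inl (i, j))))))))) n * x n) =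
   - x (Inr (Inl (i, j)))"
  by (simp add: Amat_def sumsimps)

lemma row_nu: "(\<Sum>n\<in>UNIV. Amat P k p (Inr (Inr (Inr (Inr (Inr (Inr (Inr (Inr j)))))))) n * x n) = 0"
  by (simp add: Amat_def sumsimps)

abbreviation "cB \<equiv> Inl ()"
abbreviation "cS j \<equiv> Inr (Inl j)"
abbreviation "cM \<equiv> Inr (Inr (Inl ()))"
abbreviation "cG j \<equiv> Inr (Inr (Inr (Inl j)))"
abbreviation "cEp i \<equiv> Inr (Inr (Inr (Inr (Inl i))))"
abbreviation "cEm i \<equiv> Inr (Inr (Inr (Inr (Inr (Inl i)))))"
abbreviation "cX i \<equiv> Inr (Inr (Inr (Inr (Inr (Inr (Inl i))))))"
abbreviation "cT i j \<equiv> Inr (Inr (Inr (Inr (Inr (Inr (Inr (Inl (i, j))))))))"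
abbreviation "cN j \<equiv> Inr (Inr (Inr (Inr (Inr (Inr (Inr (Inr j)))))))"

abbreviation "vX0 i \<equiv> Inl i"
abbreviation "vX i j \<equiv> Inr (Inl (i, j))"
abbreviation "vQ i \<equiv> Inr (Inr (Inl i))"
abbreviation "vY0 \<equiv> Inr (Inr (Inr (Inl ())))"
abbreviation "vY j \<equiv> Inr (Inr (Inr (Inr j)))"

lemma col_x0: "(\<Sum>s\<in>UNIV. l s * Amat P k p s (vX0 i)) =
   - l cM + l (cEp i) - l (cEm i) - di0 P i * l (cX i)"
  by (simp add: Amat_def sumsimps)

lemma col_x: "(\<Sum>s\<in>UNIV. l s * Amat P k p s (vX i j)) =
   - l (cG j) + l (cEp i) - l (cEm i) - dij P i j * l (cX i) - l (cT i j)"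
  by (simp add: Amat_def sumsimps)

lemma col_q: "(\<Sum>s\<in>UNIV. l s * Amat P k p s (vQ i)) = l (cEp i) - l (cEm i)"
  by (simp add: Amat_def sumsimps)

lemma col_y0: "(\<Sum>s\<in>UNIV. l s * Amat P k p s vY0) = - p0 P * l cB + l cM"
  by (simp add: Amat_def sumsimps)

lemma col_y: "(\<Sum>s\<in>UNIV. l s * Amat P k p s (vY j)) = - p j * l cB - l (cS j) + l (cG j)"
  by (simp add: Amat_def sumsimps)

lemma bsum: "(\<Sum>s\<in>UNIV. l s * bvec P k ps t z s) =
    - l cB * (Bk P k - (\<Sum>j\<in>UNIV. (phijk P j k + sk P k * ps j) * t j))
    - (\<Sum>j\<in>UNIV. l (cS j) * (Cj P j * t j))
    + (\<Sum>i\<in>UNIV. l (cEp i) * Rik P i k) - (\<Sum>i\<in>UNIV. l (cEm i) * Rik P i k)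
    - (\<Sum>i\<in>UNIV. l (cX i) * (Dkm P k * Rik P i k))
    - (\<Sum>i\<in>UNIV. \<Sum>j\<in>UNIV. l (cT i j) * (aijk P i j k * Rik P i k))
    + (\<Sum>j\<in>UNIV. l (cN j) * (t j - z j))"
  by (simp add: bvec_def sumsimps sum_negf algebra_simps)

lemma csum: "(\<Sum>n\<in>UNIV. cvec P k p n * x n) =
    (\<Sum>i\<in>UNIV. wk P k * di0 P i * x (vX0 i)) + (\<Sum>i\<in>UNIV. \<Sum>j\<in>UNIV. wk P k * dij P i j * x (vX i j))
   + (\<Sum>i\<in>UNIV. psik P i k * x (vQ i)) + p0 P * x vY0 + (\<Sum>j\<in>UNIV. p j * x (vY j))"
  by (simp add: cvec_def sumsimps)

lemma weak_dual:
  fixes A :: "'s::finite \<Rightarrow> 'n::finite \<Rightarrow> real"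
  assumes "\<forall>s. 0 \<le> l s" "\<forall>n. (\<Sum>s\<in>UNIV. l s * A s n) \<le> c n" "\<forall>n. 0 \<le> x n"
    "\<forall>s. b s \<le> (\<Sum>n\<in>UNIV. A s n * x n)"
  shows "(\<Sum>s\<in>UNIV. l s * b s) \<le> (\<Sum>n\<in>UNIV. c n * x n)"
proof -
  have "(\<Sum>s\<in>UNIV. l s * b s) \<le> (\<Sum>s\<in>UNIV. l s * (\<Sum>n\<in>UNIV. A s n * x n))"
    using assms(1,4) by (intro sum_mono mult_left_mono) auto
  also have "\<dots> = (\<Sum>s\<in>UNIV. \<Sum>n\<in>UNIV. l s * A s n * x n)"
    by (simp add: sum_distrib_left mult.assoc)
  also have "\<dots> = (\<Sum>n\<in>UNIV. \<Sum>s\<in>UNIV. l s * A s n * x n)"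
    by (rule sum.swap)
  also have "\<dots> = (\<Sum>n\<in>UNIV. (\<Sum>s\<in>UNIV. l s * A s n) * x n)"
    by (simp add: sum_distrib_right)
  also have "\<dots> \<le> (\<Sum>n\<in>UNIV. c n * x n)"
    using assms(2,3) by (intro sum_mono mult_right_mono) auto
  finally show ?thesis .
qed

lemma cidx_cases:
  assumes "Q cB" "\<And>j. Q (cS j)" "Q cM" "\<And>j. Q (cG j)" "\<And>i. Q (cEp i)" "\<And>i. Q (cEm i)"
    "\<And>i. Q (cX i)" "\<And>i j. Q (cT i j)" "\<And>j. Q (cN j)"
  shows "Q (s :: ('i,'j) cidx)"
proof (cases s)
  case (Inl u) then show ?thesis using assms(1) by (cases u) simp
next
  case (Inr s1) note s1 = this show ?thesis
  proof (cases s1)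
    case (Inl j) then show ?thesis using assms(2) s1 by simp
  next
    case (Inr s2) note s2 = this show ?thesis
    proof (cases s2)
      case (Inl u) then show ?thesis using assms(3) s1 s2 by (cases u) simp
    next
      case (Inr s3) note s3 = this show ?thesis
      proof (cases s3)
        case (Inl j) then show ?thesis using assms(4) s1 s2 s3 by simp
      next
        case (Inr s4) note s4 = this show ?thesis
        proof (cases s4)
          case (Inl j) then show ?thesis using assms(5) s1 s2 s3 s4 by simp
        next
          case (Inr s5) note s5 = this show ?thesis
          proof (cases s5)
            case (Inl j) then show ?thesis using assms(6) s1 s2 s3 s4 s5 by simp
          next
            case (Inr s6) note s6 = this show ?thesis
            proof (cases s6)
              case (Inl j) then show ?thesis using assms(7) s1 s2 s3 s4 s5 s6 by simp
            next
              case (Inr s7) note s7 = this show ?thesis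
              proof (cases s7)
                case (Inl ij) then show ?thesis using assms(8) s1 s2 s3 s4 s5 s6 s7 by (cases ij) simp
              next
                case (Inr j) then show ?thesis using assms(9) s1 s2 s3 s4 s5 s6 s7 by simp
              qed
            qed
          qed
        qed
      qed
    qed
  qed
qed

lemma vidx_cases:
  assumes "\<And>i. Q (vX0 i)" "\<And>i j. Q (vX i j)" "\<And>i. Q (vQ i)" "Q vY0" "\<And>j. Q (vY j)"
  shows "Q (n :: ('i,'j) vidx)"
proof (cases n)
  case (Inl i) then show ?thesis using assms(1) by simp
next
  case (Inr s1) note s1 = this show ?thesis
  proof (cases s1)
    case (Inl ij) then show ?thesis using assms(2) s1 by (cases ij) simp
  next
    case (Inr s2) note s2 = this show ?thesis
    proof (cases s2)
      case (Inl i) then show ?thesis using assms(3) s1 s2 by simp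
    next
      case (Inr s3) note s3 = this show ?thesis
      proof (cases s3)
        case (Inl u) then show ?thesis using assms(4) s1 s2 s3 by (cases u) simp
      next
        case (Inr j) then show ?thesis using assms(5) s1 s2 s3 by simp
      qed
    qed
  qed
qed

definition xu :: "('i,'j) fv \<Rightarrow> ('i,'j) vidx \<Rightarrow> real" where
  "xu u n = (case n of Inl i \<Rightarrow> fx0 u i | Inr (Inl (i, j)) \<Rightarrow> fx u i j | Inr (Inr (Inl i)) \<Rightarrow> fq u i
     | Inr (Inr (Inr (Inl _))) \<Rightarrow> fy0 u | Inr (Inr (Inr (Inr j))) \<Rightarrow> fy u j)"

definition ux :: "(('i,'j) vidx \<Rightarrow> real) \<Rightarrow> ('j \<Rightarrow> real) \<Rightarrow> ('i,'j) fv" where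
  "ux x t = \<lparr>fx0 = \<lambda>i. x (vX0 i), fx = \<lambda>i j. x (vX i j), fq = \<lambda>i. x (vQ i), fy0 = x vY0,
             fy = \<lambda>j. x (vY j), ft = t\<rparr>"

definition Tc :: "('i::finite,'j::finite,'k::finite) prm \<Rightarrow> 'k \<Rightarrow> ('j \<Rightarrow> real) \<Rightarrow> ('j \<Rightarrow> real) \<Rightarrow> real" where
  "Tc P k ps t = (\<Sum>j\<in>UNIV. (phijk P j k + sk P k * ps j) * t j)"

lemma cost_gen: "Ck P k p ps u = (\<Sum>n\<in>UNIV. cvec P k p n * xu u n) + Tc P k ps (ft u)"
proof -
  have a: "wk P k * (\<Sum>i\<in>UNIV. fx0 u i * di0 P i) = (\<Sum>i\<in>UNIV. wk P k * di0 P i * fx0 u i)"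
    by (simp add: sum_distrib_left algebra_simps)
  have b: "wk P k * (\<Sum>i\<in>UNIV. \<Sum>j\<in>UNIV. fx u i j * dij P i j) = (\<Sum>i\<in>UNIV. \<Sum>j\<in>UNIV. wk P k * dij P i j * fx u i j)"
    by (simp add: sum_distrib_left algebra_simps)
  show ?thesis unfolding Ck_def csum Tc_def using a b by (simp add: xu_def algebra_simps)
qed

lemma xu_ux: "xu (ux x t) = x"
proof
  fix n show "xu (ux x t) n = x n" by (rule vidx_cases[of "\<lambda>n. xu (ux x t) n = x n" n]) (simp_all add: xu_def ux_def)
qed

lemma ft_ux: "ft (ux x t) = t" by (simp add: ux_def)

lemma ux_in_Sk:
  assumes t: "\<forall>j. t j \<in> {0,1}" and x0: "\<forall>n. 0 \<le> x n"
    and c: "\<forall>s. bvec P k ps t z s \<le> (\<Sum>n\<in>UNIV. Amat P k p s n * x n)"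
  shows "ux x t \<in> Sk P k p ps z"
proof -
  have cB: "- (Bk P k - Tc P k ps t) \<le> - p0 P * x vY0 - (\<Sum>j\<in>UNIV. p j * x (vY j))"
    using c[rule_format, of cB] by (simp add: row_budget bvec_def Tc_def)
  have cS: "- (Cj P j * t j) \<le> - x (vY j)" for j
    using c[rule_format, of "cS j"] by (simp add: row_sig bvec_def)
  have cM: "0 \<le> x vY0 - (\<Sum>i\<in>UNIV. x (vX0 i))"
    using c[rule_format, of cM] by (simp add: row_mu2 bvec_def)
  have cG: "0 \<le> x (vY j) - (\<Sum>i\<in>UNIV. x (vX i j))" for j
    using c[rule_format, of "cG j"] by (simp add: row_gam bvec_def)
  have cEp: "Rik P i k \<le> x (vX0 i) + (\<Sum>j\<in>UNIV. x (vX i j)) + x (vQ i)" for i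
    using c[rule_format, of "cEp i"] by (simp add: row_etap bvec_def)
  have cEm: "- Rik P i k \<le> - (x (vX0 i) + (\<Sum>j\<in>UNIV. x (vX i j)) + x (vQ i))" for i
    using c[rule_format, of "cEm i"] by (simp add: row_etam bvec_def)
  have cX: "- (Dkm P k * Rik P i k) \<le> - (di0 P i * x (vX0 i) + (\<Sum>j\<in>UNIV. dij P i j * x (vX i j)))" for i
    using c[rule_format, of "cX i"] by (simp add: row_xi bvec_def)
  have cT: "- (aijk P i j k * Rik P i k) \<le> - x (vX i j)" for i j
    using c[rule_format, of "cT i j"] by (simp add: row_tau bvec_def)
  have cN: "t j - z j \<le> 0" for j
    using c[rule_format, of "cN j"] by (simp add: row_nu bvec_def)
  have nn: "0 \<le> x (vX0 i)" "0 \<le> x (vX i j)" "0 \<le> x (vQ i)" "0 \<le> x vY0" "0 \<le> x (vY j)" for i j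
    using x0 by auto
  show ?thesis unfolding Sk_def ux_def
    using cB cS cM cG cEp cEm cX cT cN nn t unfolding Tc_def
    by (auto simp: algebra_simps intro: order.antisym)
qed

lemma xu_feas:
  assumes u: "u \<in> Sk P k p ps z"
  shows "\<forall>n. 0 \<le> xu u n" "\<forall>s. bvec P k ps (ft u) z s \<le> (\<Sum>n\<in>UNIV. Amat P k p s n * xu u n)"
proof -
  note U = u[unfolded Sk_def, simplified]
  show "\<forall>n. 0 \<le> xu u n"
  proof
    fix n show "0 \<le> xu u n" by (rule vidx_cases[of "\<lambda>n. 0 \<le> xu u n" n]) (use U in \<open>simp_all add: xu_def\<close>)
  qed
  show "\<forall>s. bvec P k ps (ft u) z s \<le> (\<Sum>n\<in>UNIV. Amat P k p s n * xu u n)"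
  proof
    fix s show "bvec P k ps (ft u) z s \<le> (\<Sum>n\<in>UNIV. Amat P k p s n * xu u n)"
    proof (rule cidx_cases[of "\<lambda>s. bvec P k ps (ft u) z s \<le> (\<Sum>n\<in>UNIV. Amat P k p s n * xu u n)" s])
      show "bvec P k ps (ft u) z cB \<le> (\<Sum>n\<in>UNIV. Amat P k p cB n * xu u n)"
        using U by (simp add: row_budget bvec_def xu_def)
    next
      fix j show "bvec P k ps (ft u) z (cS j) \<le> (\<Sum>n\<in>UNIV. Amat P k p (cS j) n * xu u n)"
        using U by (simp add: row_sig bvec_def xu_def)
    next
      show "bvec P k ps (ft u) z cM \<le> (\<Sum>n\<in>UNIV. Amat P k p cM n * xu u n)"
        using U by (simp add: row_mu2 bvec_def xu_def)
    next
      fix j show "bvec P k ps (ft u) z (cG j) \<le> (\<Sum>n\<in>UNIV. Amat P k p (cG j) n * xu u n)"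
        using U by (simp add: row_gam bvec_def xu_def)
    next
      fix i show "bvec P k ps (ft u) z (cEp i) \<le> (\<Sum>n\<in>UNIV. Amat P k p (cEp i) n * xu u n)"
        using U by (simp add: row_etap bvec_def xu_def)
    next
      fix i show "bvec P k ps (ft u) z (cEm i) \<le> (\<Sum>n\<in>UNIV. Amat P k p (cEm i) n * xu u n)"
        using U by (simp add: row_etam bvec_def xu_def)
    next
      fix i
      have h: "fx0 u i * di0 P i + (\<Sum>j\<in>UNIV. fx u i j * dij P i j) \<le> Dkm P k * Rik P i k" using U by blast
      have e: "(\<Sum>j\<in>UNIV. dij P i j * fx u i j) = (\<Sum>j\<in>UNIV. fx u i j * dij P i j)" by (simp add: mult.commute)
      have "bvec P k ps (ft u) z (cX i) = - (Dkm P k * Rik P i k)" by (simp add: bvec_def)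
      moreover have "(\<Sum>n\<in>UNIV. Amat P k p (cX i) n * xu u n) = - (di0 P i * fx0 u i + (\<Sum>j\<in>UNIV. dij P i j * fx u i j))"
        by (simp only: row_xi) (simp add: xu_def)
      ultimately show "bvec P k ps (ft u) z (cX i) \<le> (\<Sum>n\<in>UNIV. Amat P k p (cX i) n * xu u n)"
        using h e by (simp add: mult.commute)
    next
      fix i j show "bvec P k ps (ft u) z (cT i j) \<le> (\<Sum>n\<in>UNIV. Amat P k p (cT i j) n * xu u n)"
        using U by (simp add: row_tau bvec_def xu_def)
    next
      fix j show "bvec P k ps (ft u) z (cN j) \<le> (\<Sum>n\<in>UNIV. Amat P k p (cN j) n * xu u n)"
        using U by (simp add: row_nu bvec_def xu_def)
    qed
  qed
qed

definition rel :: "(('i,'j) cidx \<Rightarrow> real) \<Rightarrow> ('i,'j) dv \<Rightarrow> bool" where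
  "rel l D \<longleftrightarrow> mu1 D = l cB \<and> mu2 D = l cM \<and> (\<forall>j. nu D j = l (cN j)) \<and> (\<forall>j. Gam D j = l (cG j))
     \<and> (\<forall>j. sig D j = l (cS j)) \<and> (\<forall>i. xi D i = l (cX i)) \<and> (\<forall>i j. tau D i j = l (cT i j))
     \<and> (\<forall>i. eta D i = l (cEp i) - l (cEm i))"

lemma obj_eq:
  assumes "rel l D"
  shows "Tc P k ps t + (\<Sum>s\<in>UNIV. l s * bvec P k ps t z s) =
        (\<Sum>j\<in>UNIV. (phijk P j k + sk P k * ps j) * t j)
      - mu1 D * (Bk P k - (\<Sum>j\<in>UNIV. (phijk P j k + sk P k * ps j) * t j))
      + (\<Sum>j\<in>UNIV. nu D j * (t j - z j))
      + (\<Sum>i\<in>UNIV. Rik P i k * eta D i)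
      - (\<Sum>i\<in>UNIV. Rik P i k * Dkm P k * xi D i)
      - (\<Sum>j\<in>UNIV. Cj P j * t j * sig D j)
      - (\<Sum>i\<in>UNIV. \<Sum>j\<in>UNIV. aijk P i j k * tau D i j * Rik P i k)"
proof -
  have r: "mu1 D = l cB" "\<And>j. nu D j = l (cN j)" "\<And>j. sig D j = l (cS j)" "\<And>i. xi D i = l (cX i)"
     "\<And>i j. tau D i j = l (cT i j)" "\<And>i. eta D i = l (cEp i) - l (cEm i)"
    using assms unfolding rel_def by auto
  have e1: "(\<Sum>i\<in>UNIV. Rik P i k * eta D i) = (\<Sum>i\<in>UNIV. l (cEp i) * Rik P i k) - (\<Sum>i\<in>UNIV. l (cEm i) * Rik P i k)"
    by (simp add: r sum_subtractf[symmetric] algebra_simps)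
  have e2: "(\<Sum>i\<in>UNIV. Rik P i k * Dkm P k * xi D i) = (\<Sum>i\<in>UNIV. l (cX i) * (Dkm P k * Rik P i k))"
    by (simp add: r algebra_simps)
  have e3: "(\<Sum>j\<in>UNIV. Cj P j * t j * sig D j) = (\<Sum>j\<in>UNIV. l (cS j) * (Cj P j * t j))"
    by (simp add: r algebra_simps)
  have e4: "(\<Sum>i\<in>UNIV. \<Sum>j\<in>UNIV. aijk P i j k * tau D i j * Rik P i k) = (\<Sum>i\<in>UNIV. \<Sum>j\<in>UNIV. l (cT i j) * (aijk P i j k * Rik P i k))"
    by (simp add: r algebra_simps)
  have e5: "(\<Sum>j\<in>UNIV. nu D j * (t j - z j)) = (\<Sum>j\<in>UNIV. l (cN j) * (t j - z j))"
    by (simp add: r)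
  show ?thesis unfolding bsum e1 e2 e3 e4 e5 Tc_def r(1) by simp
qed

lemma cols_eq:
  assumes "rel l D"
  shows "(\<forall>n. (\<Sum>s\<in>UNIV. l s * Amat P k p s n) \<le> cvec P k p n) \<longleftrightarrow>
     (p0 P * (1 + mu1 D) - mu2 D \<ge> 0
   \<and> (\<forall>j. p j * mu1 D - Gam D j + sig D j + p j \<ge> 0)
   \<and> (\<forall>i. mu2 D + di0 P i * xi D i - eta D i \<ge> - wk P k * di0 P i)
   \<and> (\<forall>i. eta D i \<le> psik P i k)
   \<and> (\<forall>i j. Gam D j + dij P i j * xi D i + tau D i j - eta D i \<ge> - wk P k * dij P i j))"
    (is "?L \<longleftrightarrow> ?R")
proof -
  have r: "mu1 D = l cB" "mu2 D = l cM" "\<And>j. Gam D j = l (cG j)" "\<And>j. sig D j = l (cS j)" "\<And>i. xi D i = l (cX i)"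
     "\<And>i j. tau D i j = l (cT i j)" "\<And>i. eta D i = l (cEp i) - l (cEm i)"
    using assms unfolding rel_def by auto
  show ?thesis
  proof
    assume L: ?L
    have a: "- p0 P * l cB + l cM \<le> p0 P" using L[rule_format, of vY0] by (simp add: col_y0 cvec_def)
    have b: "- p j * l cB - l (cS j) + l (cG j) \<le> p j" for j using L[rule_format, of "vY j"] by (simp add: col_y cvec_def)
    have c: "- l cM + l (cEp i) - l (cEm i) - di0 P i * l (cX i) \<le> wk P k * di0 P i" for i
      using L[rule_format, of "vX0 i"] by (simp add: col_x0 cvec_def)
    have d: "l (cEp i) - l (cEm i) \<le> psik P i k" for i using L[rule_format, of "vQ i"] by (simp add: col_q cvec_def)
    have e: "- l (cG j) + l (cEp i) - l (cEm i) - dij P i j * l (cX i) - l (cT i j) \<le> wk P k * dij P i j" for i j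
      using L[rule_format, of "vX i j"] by (simp add: col_x cvec_def)
    show ?R unfolding r using a b c d e by (auto simp: algebra_simps)
  next
    assume R: ?R
    show ?L
    proof
      fix n show "(\<Sum>s\<in>UNIV. l s * Amat P k p s n) \<le> cvec P k p n"
        by (rule vidx_cases[of "\<lambda>n. (\<Sum>s\<in>UNIV. l s * Amat P k p s n) \<le> cvec P k p n" n])
           (use R in \<open>simp_all add: r col_x0 col_x col_q col_y0 col_y cvec_def algebra_simps\<close>)
    qed
  qed
qed

lemma dual_exists:
  fixes P :: "('i::finite,'j::finite,'k::finite) prm" and v :: "('i,'j,'k) pv"
  assumes vp: "valid_prm P" and t: "\<forall>j. tv j \<in> {0,1}"
    and opt: "\<forall>u\<in>Sk P k (pp v) (pps v) (zz v). Ck P k (pp v) (pps v) (fol v k) \<le> Ck P k (pp v) (pps v) u"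
  shows "\<exists>D. dual_ok P v k tv D"
proof -
  define p where "p = pp v"
  define ps where "ps = pps v"
  define z where "z = zz v"
  define cv where "cv = Ck P k p ps (fol v k)"
  define l0 :: "('i,'j) cidx \<Rightarrow> real" where "l0 = (\<lambda>s. case s of Inr (Inl j) \<Rightarrow> \<bar>p j\<bar> | _ \<Rightarrow> 0)"
  define D0 :: "('i,'j) dv" where
    "D0 = \<lparr>mu1 = 0, mu2 = 0, nu = \<lambda>_. 0, Gam = \<lambda>_. 0, sig = \<lambda>j. \<bar>p j\<bar>, xi = \<lambda>_. 0, tau = \<lambda>_ _. 0, eta = \<lambda>_. 0\<rparr>"
  have rel0: "rel l0 D0" unfolding rel_def l0_def D0_def by simp
  have VP: "\<forall>j. Cj P j > 0" "\<forall>i j. dij P i j \<ge> 0" "\<forall>i. di0 P i \<ge> 0" "\<forall>k. wk P k \<ge> 0"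
     "\<forall>i k. psik P i k \<ge> 0" "p0 P \<ge> 0" using vp unfolding valid_prm_def by auto
  have dfeas: "\<exists>l. (\<forall>s. 0 \<le> l s) \<and> (\<forall>n. (\<Sum>s\<in>UNIV. l s * Amat P k p s n) \<le> cvec P k p n)"
  proof (intro exI conjI)
    show "\<forall>s. 0 \<le> l0 s"
    proof
      fix s show "0 \<le> l0 s" by (rule cidx_cases[of "\<lambda>s. 0 \<le> l0 s" s]) (simp_all add: l0_def)
    qed
    show "\<forall>n. (\<Sum>s\<in>UNIV. l0 s * Amat P k p s n) \<le> cvec P k p n"
      unfolding cols_eq[OF rel0] using VP by (simp add: D0_def mult_nonneg_nonneg abs_ge_minus_self add.commute[of "\<bar>_\<bar>"]) (smt (verit) abs_ge_minus_self)
  qed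
  have bound: "cv - Tc P k ps tv \<le> (\<Sum>n\<in>UNIV. cvec P k p n * x n)"
    if x0: "\<forall>n. 0 \<le> x n" and c: "\<forall>s. bvec P k ps tv z s \<le> (\<Sum>n\<in>UNIV. Amat P k p s n * x n)" for x
  proof -
    have "ux x tv \<in> Sk P k p ps z" by (rule ux_in_Sk[OF t x0 c])
    then have "cv \<le> Ck P k p ps (ux x tv)" using opt unfolding cv_def p_def ps_def z_def by blast
    also have "\<dots> = (\<Sum>n\<in>UNIV. cvec P k p n * x n) + Tc P k ps tv"
      by (simp add: cost_gen xu_ux ft_ux)
    finally show ?thesis by simp
  qed
  obtain l where l: "\<forall>s. 0 \<le> l s" "\<forall>n. (\<Sum>s\<in>UNIV. l s * Amat P k p s n) \<le> cvec P k p n"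
     "cv - Tc P k ps tv \<le> (\<Sum>s\<in>UNIV. l s * bvec P k ps tv z s)"
    using lp_duality[OF dfeas bound] by blast
  define D :: "('i,'j) dv" where
    "D = \<lparr>mu1 = l cB, mu2 = l cM, nu = \<lambda>j. l (cN j), Gam = \<lambda>j. l (cG j), sig = \<lambda>j. l (cS j),
          xi = \<lambda>i. l (cX i), tau = \<lambda>i j. l (cT i j), eta = \<lambda>i. l (cEp i) - l (cEm i)\<rparr>"
  have relD: "rel l D" unfolding rel_def D_def by simp
  have cons: "p0 P * (1 + mu1 D) - mu2 D \<ge> 0
   \<and> (\<forall>j. p j * mu1 D - Gam D j + sig D j + p j \<ge> 0)
   \<and> (\<forall>i. mu2 D + di0 P i * xi D i - eta D i \<ge> - wk P k * di0 P i)
   \<and> (\<forall>i. eta D i \<le> psik P i k)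
   \<and> (\<forall>i j. Gam D j + dij P i j * xi D i + tau D i j - eta D i \<ge> - wk P k * dij P i j)"
    using cols_eq[OF relD] l(2) by blast
  have obj: "cv \<le> (\<Sum>j\<in>UNIV. (phijk P j k + sk P k * ps j) * tv j)
      - mu1 D * (Bk P k - (\<Sum>j\<in>UNIV. (phijk P j k + sk P k * ps j) * tv j))
      + (\<Sum>j\<in>UNIV. nu D j * (tv j - z j))
      + (\<Sum>i\<in>UNIV. Rik P i k * eta D i)
      - (\<Sum>i\<in>UNIV. Rik P i k * Dkm P k * xi D i)
      - (\<Sum>j\<in>UNIV. Cj P j * tv j * sig D j)
      - (\<Sum>i\<in>UNIV. \<Sum>j\<in>UNIV. aijk P i j k * tau D i j * Rik P i k)"
    using obj_eq[OF relD, of P k ps tv z] l(3) by linarith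
  have nn: "mu1 D \<ge> 0 \<and> mu2 D \<ge> 0 \<and> (\<forall>j. nu D j \<ge> 0) \<and> (\<forall>j. Gam D j \<ge> 0) \<and> (\<forall>j. sig D j \<ge> 0)
   \<and> (\<forall>i. xi D i \<ge> 0) \<and> (\<forall>i j. tau D i j \<ge> 0)" using l(1) unfolding D_def by simp
  show ?thesis unfolding dual_ok_def
    using nn cons obj unfolding cv_def p_def ps_def z_def by blast
qed

definition lofD :: "('i,'j) dv \<Rightarrow> ('i,'j) cidx \<Rightarrow> real" where
  "lofD D s = (case s of
    Inl _ \<Rightarrow> mu1 D
  | Inr (Inl j) \<Rightarrow> sig D j
  | Inr (Inr (Inl _)) \<Rightarrow> mu2 D
  | Inr (Inr (Inr (Inl j))) \<Rightarrow> Gam D j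
  | Inr (Inr (Inr (Inr (Inl i)))) \<Rightarrow> max (eta D i) 0
  | Inr (Inr (Inr (Inr (Inr (Inl i))))) \<Rightarrow> max (- eta D i) 0
  | Inr (Inr (Inr (Inr (Inr (Inr (Inl i)))))) \<Rightarrow> xi D i
  | Inr (Inr (Inr (Inr (Inr (Inr (Inr (Inl (i, j)))))))) \<Rightarrow> tau D i j
  | Inr (Inr (Inr (Inr (Inr (Inr (Inr (Inr j))))))) \<Rightarrow> nu D j)"

lemma dual_weak:
  fixes P :: "('i::finite,'j::finite,'k::finite) prm" and v :: "('i,'j,'k) pv"
  assumes dk: "dual_ok P v k (ft u) D" and u: "u \<in> Sk P k (pp v) (pps v) (zz v)"
  shows "Ck P k (pp v) (pps v) (fol v k) \<le> Ck P k (pp v) (pps v) u"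
proof -
  define l where "l = lofD D"
  have relD: "rel l D" unfolding rel_def l_def lofD_def by auto
  note DK = dk[unfolded dual_ok_def]
  have l0: "\<forall>s. 0 \<le> l s"
  proof
    fix s show "0 \<le> l s" by (rule cidx_cases[of "\<lambda>s. 0 \<le> l s" s]) (use DK in \<open>simp_all add: l_def lofD_def\<close>)
  qed
  have cols: "\<forall>n. (\<Sum>s\<in>UNIV. l s * Amat P k (pp v) s n) \<le> cvec P k (pp v) n"
    unfolding cols_eq[OF relD] using DK by blast
  have wd: "(\<Sum>s\<in>UNIV. l s * bvec P k (pps v) (ft u) (zz v) s) \<le> (\<Sum>n\<in>UNIV. cvec P k (pp v) n * xu u n)"
    using weak_dual[OF l0 cols xu_feas[OF u]] .
  have "Ck P k (pp v) (pps v) (fol v k) \<le> Tc P k (pps v) (ft u) + (\<Sum>s\<in>UNIV. l s * bvec P k (pps v) (ft u) (zz v) s)"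
    unfolding obj_eq[OF relD] using DK by blast
  also have "\<dots> \<le> Tc P k (pps v) (ft u) + (\<Sum>n\<in>UNIV. cvec P k (pp v) n * xu u n)" using wd by simp
  also have "\<dots> = Ck P k (pp v) (pps v) u" by (simp add: cost_gen)
  finally show ?thesis .
qed


lemma feas_BMIP_iff: "feas_BMIP P v \<longleftrightarrow> feas_BMIP1 P v"
  unfolding feas_BMIP_def feas_BMIP1_def is_arg_min_linorder by blast

lemma feas_e_iff:
  fixes P :: "('i::finite,'j::finite,'k::finite) prm" and en :: "'k \<Rightarrow> nat \<Rightarrow> 'j \<Rightarrow> real"
    and v :: "('i,'j,'k) pv"
  assumes vp: "valid_prm P"
    and bij: "\<forall>k. bij_betw (en k) {1..2 ^ CARD('j)} {t. \<forall>j. t j \<in> {0,1}}"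
  shows "(\<exists>D. feas_BMIPe P en v D) \<longleftrightarrow> feas_BMIP1 P v"
proof
  assume "\<exists>D. feas_BMIPe P en v D"
  then obtain D where F: "feas_BMIPe P en v D" by blast
  have "\<forall>k. \<forall>u \<in> Sk P k (pp v) (pps v) (zz v). Ck P k (pp v) (pps v) (fol v k) \<le> Ck P k (pp v) (pps v) u"
  proof (intro allI ballI)
    fix k u assume u: "u \<in> Sk P k (pp v) (pps v) (zz v)"
    have "ft u \<in> {t. \<forall>j. t j \<in> {0,1}}" using u unfolding Sk_def by auto
    then obtain l :: nat where l: "l \<in> {1..2 ^ CARD('j)}" "en k l = ft u"
      using bij[rule_format, of k] unfolding bij_betw_def by (metis imageE)
    have "dual_ok P v k (ft u) (D k l)" using F l unfolding feas_BMIPe_def by metis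
    then show "Ck P k (pp v) (pps v) (fol v k) \<le> Ck P k (pp v) (pps v) u" by (rule dual_weak[OF _ u])
  qed
  then show "feas_BMIP1 P v" using F unfolding feas_BMIPe_def feas_BMIP1_def by blast
next
  assume F: "feas_BMIP1 P v"
  define D where "D = (\<lambda>k l. SOME D. dual_ok P v k (en k l) D)"
  have "\<forall>k. \<forall>l \<in> {1..2 ^ CARD('j)}. dual_ok P v k (en k l) (D k l)"
  proof (intro allI ballI)
    fix k and l :: nat assume l: "l \<in> {1..2 ^ CARD('j)}"
    have "en k l \<in> {t. \<forall>j. t j \<in> {0,1}}" using bij[rule_format, of k] l unfolding bij_betw_def by blast
    then have "\<exists>D. dual_ok P v k (en k l) D"
      using dual_exists[OF vp] F unfolding feas_BMIP1_def by blast
    then show "dual_ok P v k (en k l) (D k l)" unfolding D_def by (rule someI_ex)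
  qed
  then have "feas_BMIPe P en v D" using F unfolding feas_BMIPe_def feas_BMIP1_def by blast
  then show "\<exists>D. feas_BMIPe P en v D" by blast
qed

theorem proposition3:
  fixes P :: "('i::finite,'j::finite,'k::finite) prm"
    and en :: "'k \<Rightarrow> nat \<Rightarrow> 'j \<Rightarrow> real"
  assumes "valid_prm P"
    and "\<exists>v. opt_BMIP P v"
    and "\<forall>k. bij_betw (en k) {1..2 ^ CARD('j)} {t. \<forall>j. t j \<in> {0,1}}"
  shows "(\<exists>v. opt_BMIP1 P v) \<and> (\<exists>v D. opt_BMIPe P en v D)
       \<and> (\<forall>v v' D'. opt_BMIP1 P v \<longrightarrow> opt_BMIPe P en v' D' \<longrightarrow> profit P v = profit P v')
       \<and> (\<forall>v. opt_BMIP1 P v \<longleftrightarrow> (\<exists>D. opt_BMIPe P en v D))"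
proof -
  have FE: "\<And>v. (\<exists>D. feas_BMIPe P en v D) \<longleftrightarrow> feas_BMIP1 P v"
    using feas_e_iff[OF assms(1) assms(3)] by blast
  have eq: "opt_BMIP1 P v \<longleftrightarrow> (\<exists>D. opt_BMIPe P en v D)" for v
  proof
    assume "opt_BMIP1 P v"
    then have "feas_BMIP1 P v" "\<forall>v'. feas_BMIP1 P v' \<longrightarrow> profit P v' \<le> profit P v"
      unfolding opt_BMIP1_def by auto
    then obtain D where "feas_BMIPe P en v D" "\<forall>v' D'. feas_BMIPe P en v' D' \<longrightarrow> profit P v' \<le> profit P v"
      using FE by blast
    then show "\<exists>D. opt_BMIPe P en v D" unfolding opt_BMIPe_def by blast
  next
    assume "\<exists>D. opt_BMIPe P en v D"
    then obtain D where "feas_BMIPe P en v D" "\<forall>v' D'. feas_BMIPe P en v' D' \<longrightarrow> profit P v' \<le> profit P v"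
      unfolding opt_BMIPe_def by blast
    then show "opt_BMIP1 P v" unfolding opt_BMIP1_def using FE by blast
  qed
  have opt1: "\<exists>v. opt_BMIP1 P v"
    using assms(2) unfolding opt_BMIP_def opt_BMIP1_def feas_BMIP_iff by blast
  have prof: "profit P v = profit P v'" if "opt_BMIP1 P v" "opt_BMIPe P en v' D'" for v v' D'
  proof -
    have "opt_BMIP1 P v'" using eq that(2) by blast
    then show ?thesis using that(1) unfolding opt_BMIP1_def by (meson order.antisym)
  qed
  show ?thesis using opt1 eq prof by blast
qed

end
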